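(* Let $X\in\mathcal M_{\mathbf r}$ and $V\in\mathrm T_X\mathcal M_{\mathbf r}$. Suppose $V$ is represented both by cores $\delta V_1,\dots,\delta V_d$ as $V(i_1,\dots,i_d)=\sum_{k=1}^dU_1(i_1)\cdots U_{k-1}(i_{k-1})\delta V_k(i_k)U_{k+1}(i_{k+1})\cdots U_d(i_d)$ with $(\delta V_k^L)^\top U_k^L=0$ for $k\in[d-1]$, and by cores $\delta\tilde V_1,\dots,\delta\tilde V_d$ as $V(i_1,\dots,i_d)=\sum_{k=1}^dU_1(i_1)\cdots U_{k-1}(i_{k-1})\delta\tilde V_k(i_k)\tilde U_{k+1}(i_{k+1})\cdots\tilde U_d(i_d)$ with $(\delta\tilde V_k^L)^\top U_k^L=0$ for $k\in[d-1]$. Then $\delta\tilde V_k^L=\delta V_k^LR_k^\top$ for all $k\in[d-1]$, where $R_k\in\mathbb R^{r_k\times r_k}$ is the invertible matrix with $X_{\ge k+1}=\tilde X_{\ge k+1}R_k$; and $\delta\tilde V_d^L=\delta V_d^L$.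
   Context: Fix $d\ge2$, positive integers $n_1,\dots,n_d$, $\mathbf r=(r_1,\dots,r_{d-1})$, $r_0=r_d=1$. Flattenings $Z^{<\mu>}$ use colexicographic ordering of row indices $(i_1,\dots,i_\mu)$ and column indices $(i_{\mu+1},\dots,i_d)$. $\mathcal M_{\mathbf r}$ is the manifold of tensors of TT-rank $\mathbf r$ (TT-rank $=(\mathrm{rank}\,Z^{<1>},\dots,\mathrm{rank}\,Z^{<d-1>})$). $U_1,\dots,U_d$ is a minimal left-orthogonal TT decomposition of $X$ ($U_k\in\mathbb R^{r_{k-1}\times n_k\times r_k}$, $X(i_1,\dots,i_d)=U_1(i_1)\cdots U_d(i_d)$, $(U_k^L)^\top U_k^L=I$ for $k<d$, with $U^L=U^{<2>}$, $U^R=U^{<1>}$), and $\tilde U_1,\dots,\tilde U_d$ is the minimal right-orthogonal TT decomposition of $X$ obtained from it by right-orthogonalization ($\tilde U_k^R(\tilde U_k^R)^\top=I$ for $k\ge2$). Right interface matrices: $X_{\ge d+1}=1$, $X_{\ge k}^\top=U_k^R(X_{\ge k+1}^\top\otimes I_{n_k})$, and $\tilde X_{\ge k}$ likewise from $\tilde U_k$; $X_{\ge k+1}$ and $\tilde X_{\ge k+1}$ have the same column space, so an invertible $R_k$ with $X_{\ge k+1}=\tilde X_{\ge k+1}R_k$ exists. *)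

theory Defs
  imports "Jordan_Normal_Form.DL_Rank"
begin

text \<open>A d-th order tensor of size n 1 x ... x n d is a function
  Z :: (nat => nat) => real evaluated at index functions i with i j < n j for 1 <= j <= d
  (and i j = 0 for j outside 1..d).\<close>

definition tt_index :: "nat \<Rightarrow> (nat \<Rightarrow> nat) \<Rightarrow> (nat \<Rightarrow> nat) set" where
  "tt_index d n = {i. (\<forall>j\<in>{1..d}. i j < n j) \<and> (\<forall>j. j \<notin> {1..d} \<longrightarrow> i j = 0)}"

text \<open>Colexicographic decoding: component j of a multi-index (i a, i (a+1), ...) linearised as
  i a + n a * (i (a+1) + n (a+1) * ...).\<close>
definition colex_decode :: "(nat \<Rightarrow> nat) \<Rightarrow> nat \<Rightarrow> nat \<Rightarrow> nat \<Rightarrow> nat" where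
  "colex_decode n a p j = (p div (\<Prod>l\<in>{a..<j}. n l)) mod n j"

definition flattening :: "nat \<Rightarrow> (nat \<Rightarrow> nat) \<Rightarrow> ((nat \<Rightarrow> nat) \<Rightarrow> real) \<Rightarrow> nat \<Rightarrow> real mat" where
  "flattening d n Z \<mu> = mat (\<Prod>j\<in>{1..\<mu>}. n j) (\<Prod>j\<in>{\<mu>+1..d}. n j)
     (\<lambda>(p, q). Z (\<lambda>j. if j \<in> {1..\<mu>} then colex_decode n 1 p j
                      else if j \<in> {\<mu>+1..d} then colex_decode n (\<mu>+1) q j else 0))"

definition mat_rank :: "real mat \<Rightarrow> nat" where
  "mat_rank A = vec_space.rank (dim_row A) A"

definition has_tt_rank :: "nat \<Rightarrow> (nat \<Rightarrow> nat) \<Rightarrow> (nat \<Rightarrow> nat) \<Rightarrow> ((nat \<Rightarrow> nat) \<Rightarrow> real) \<Rightarrow> bool" where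
  "has_tt_rank d n r Z \<longleftrightarrow> (\<forall>\<mu>\<in>{1..d-1}. mat_rank (flattening d n Z \<mu>) = r \<mu>)"

fun mprod :: "nat \<Rightarrow> real mat list \<Rightarrow> real mat" where
  "mprod m [] = 1\<^sub>m m"
| "mprod m (A # As) = A * mprod (dim_col A) As"

definition core_dims :: "nat \<Rightarrow> (nat \<Rightarrow> nat) \<Rightarrow> (nat \<Rightarrow> nat) \<Rightarrow> (nat \<Rightarrow> nat \<Rightarrow> real mat) \<Rightarrow> bool" where
  "core_dims d n r G \<longleftrightarrow> (\<forall>k\<in>{1..d}. \<forall>i<n k. G k i \<in> carrier_mat (r (k-1)) (r k))"

definition tt_repr :: "nat \<Rightarrow> (nat \<Rightarrow> nat) \<Rightarrow> (nat \<Rightarrow> nat \<Rightarrow> real mat) \<Rightarrow> ((nat \<Rightarrow> nat) \<Rightarrow> real) \<Rightarrow> bool" where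
  "tt_repr d n G Z \<longleftrightarrow> (\<forall>i\<in>tt_index d n. Z i = mprod 1 (map (\<lambda>j. G j (i j)) [1..<d+1]) $$ (0, 0))"

text \<open>Left unfolding G^L = G^{<2>}: rows (alpha, i) colex (alpha + r(k-1) * i), columns beta.\<close>
definition leftU :: "(nat \<Rightarrow> nat) \<Rightarrow> (nat \<Rightarrow> nat) \<Rightarrow> (nat \<Rightarrow> nat \<Rightarrow> real mat) \<Rightarrow> nat \<Rightarrow> real mat" where
  "leftU r n G k = mat (r (k-1) * n k) (r k) (\<lambda>(p, \<beta>). G k (p div r (k-1)) $$ (p mod r (k-1), \<beta>))"

text \<open>Right unfolding G^R = G^{<1>}: rows alpha, columns (i, beta) colex (i + n k * beta).\<close>
definition rightU :: "(nat \<Rightarrow> nat) \<Rightarrow> (nat \<Rightarrow> nat) \<Rightarrow> (nat \<Rightarrow> nat \<Rightarrow> real mat) \<Rightarrow> nat \<Rightarrow> real mat" where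
  "rightU r n G k = mat (r (k-1)) (n k * r k) (\<lambda>(\<alpha>, q). G k (q mod n k) $$ (\<alpha>, q div n k))"

definition kron :: "real mat \<Rightarrow> real mat \<Rightarrow> real mat" where
  "kron A B = mat (dim_row A * dim_row B) (dim_col A * dim_col B)
     (\<lambda>(i, j). A $$ (i div dim_row B, j div dim_col B) * B $$ (i mod dim_row B, j mod dim_col B))"

text \<open>XgeT d n r G m = (X_{>= d+1-m})^T, via X_{>= d+1} = 1 and
  X_{>= k}^T = G_k^R (X_{>= k+1}^T kron I_{n k}).\<close>
fun XgeT :: "nat \<Rightarrow> (nat \<Rightarrow> nat) \<Rightarrow> (nat \<Rightarrow> nat) \<Rightarrow> (nat \<Rightarrow> nat \<Rightarrow> real mat) \<Rightarrow> nat \<Rightarrow> real mat" where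
  "XgeT d n r G 0 = 1\<^sub>m 1"
| "XgeT d n r G (Suc m) = rightU r n G (d - m) * kron (XgeT d n r G m) (1\<^sub>m (n (d - m)))"

text \<open>Right interface matrix X_{>= k}, for 1 <= k <= d+1.\<close>
definition Xge :: "nat \<Rightarrow> (nat \<Rightarrow> nat) \<Rightarrow> (nat \<Rightarrow> nat) \<Rightarrow> (nat \<Rightarrow> nat \<Rightarrow> real mat) \<Rightarrow> nat \<Rightarrow> real mat" where
  "Xge d n r G k = transpose_mat (XgeT d n r G (d + 1 - k))"

definition left_orth :: "nat \<Rightarrow> (nat \<Rightarrow> nat) \<Rightarrow> (nat \<Rightarrow> nat) \<Rightarrow> (nat \<Rightarrow> nat \<Rightarrow> real mat) \<Rightarrow> bool" where
  "left_orth d n r G \<longleftrightarrow> (\<forall>k\<in>{1..d-1}. transpose_mat (leftU r n G k) * leftU r n G k = 1\<^sub>m (r k))"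

definition right_orth :: "nat \<Rightarrow> (nat \<Rightarrow> nat) \<Rightarrow> (nat \<Rightarrow> nat) \<Rightarrow> (nat \<Rightarrow> nat \<Rightarrow> real mat) \<Rightarrow> bool" where
  "right_orth d n r G \<longleftrightarrow> (\<forall>k\<in>{2..d}. rightU r n G k * transpose_mat (rightU r n G k) = 1\<^sub>m (r (k-1)))"

text \<open>Gauge relation produced by right-orthogonalisation: there are invertible S k
  (S 0 = S d = 1) with Gt k i = (S (k-1))^{-1} * G k i * S k.\<close>
definition gauge_related :: "nat \<Rightarrow> (nat \<Rightarrow> nat) \<Rightarrow> (nat \<Rightarrow> nat) \<Rightarrow> (nat \<Rightarrow> nat \<Rightarrow> real mat) \<Rightarrow> (nat \<Rightarrow> nat \<Rightarrow> real mat) \<Rightarrow> bool" where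
  "gauge_related d n r G Gt \<longleftrightarrow> (\<exists>S :: nat \<Rightarrow> real mat. S 0 = 1\<^sub>m 1 \<and> S d = 1\<^sub>m 1 \<and>
     (\<forall>k\<in>{1..d-1}. S k \<in> carrier_mat (r k) (r k) \<and> invertible_mat (S k)) \<and>
     (\<forall>k\<in>{1..d}. \<forall>i<n k. G k i * S k = S (k-1) * Gt k i))"

definition tangent_repr :: "nat \<Rightarrow> (nat \<Rightarrow> nat) \<Rightarrow> (nat \<Rightarrow> nat \<Rightarrow> real mat) \<Rightarrow> (nat \<Rightarrow> nat \<Rightarrow> real mat)
     \<Rightarrow> (nat \<Rightarrow> nat \<Rightarrow> real mat) \<Rightarrow> ((nat \<Rightarrow> nat) \<Rightarrow> real) \<Rightarrow> bool" where
  "tangent_repr d n G H dV V \<longleftrightarrow> (\<forall>i\<in>tt_index d n. V i =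
     (\<Sum>k=1..d. mprod 1 (map (\<lambda>j. G j (i j)) [1..<k] @ [dV k (i k)] @ map (\<lambda>j. H j (i j)) [k+1..<d+1]) $$ (0, 0)))"

definition gauge_cond :: "nat \<Rightarrow> (nat \<Rightarrow> nat) \<Rightarrow> (nat \<Rightarrow> nat) \<Rightarrow> (nat \<Rightarrow> nat \<Rightarrow> real mat) \<Rightarrow> (nat \<Rightarrow> nat \<Rightarrow> real mat) \<Rightarrow> bool" where
  "gauge_cond d n r G dV \<longleftrightarrow> (\<forall>k\<in>{1..d-1}. transpose_mat (leftU r n dV k) * leftU r n G k = 0\<^sub>m (r k) (r k))"

end

theory Submission
  imports Defs
begin

lemma sum_split: "(\<Sum>l<a*b. f l) = (\<Sum>x<b. \<Sum>y<a. f (y + a*x))" for f :: "nat \<Rightarrow> real"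
proof (induction b)
  case 0 then show ?case by simp
next
  case (Suc b)
  have "{..<a * Suc b} = {..<a*b} \<union> {a*b..<a*b+a}" by auto
  then have "(\<Sum>l<a*Suc b. f l) = (\<Sum>l<a*b. f l) + (\<Sum>l\<in>{a*b..<a*b+a}. f l)"
    by (simp add: sum.union_disjoint ivl_disj_int)
  also have "(\<Sum>l\<in>{a*b..<a*b+a}. f l) = (\<Sum>y<a. f (y + a*b))"
    using sum.shift_bounds_nat_ivl[of f 0 "a*b" a] by (simp add: lessThan_atLeast0 add.commute)
  finally show ?case using Suc by simp
qed

lemma cd_self: "colex_decode n k q k = q mod n k"
  by (simp add: colex_decode_def)

lemma cd_shift: "k < j \<Longrightarrow> colex_decode n k q j = colex_decode n (Suc k) (q div n k) j"
  by (simp add: colex_decode_def prod.atLeast_Suc_lessThan div_mult2_eq)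

lemma mprod_Cons_upt:
  assumes "a < b" "G a (i a) \<in> carrier_mat x (r a)"
  shows "mprod m (map (\<lambda>j. G j (i j)) [a..<b] @ rest) = G a (i a) * mprod (r a) (map (\<lambda>j. G j (i j)) [Suc a..<b] @ rest)"
  using assms by (simp add: upt_conv_Cons)

lemma mprod_carrier:
  assumes cd: "core_dims d n r G" and "1 \<le> a" "a \<le> b" "b \<le> Suc d"
    and idx: "\<forall>j. a \<le> j \<longrightarrow> j < b \<longrightarrow> i j < n j"
  shows "mprod (r (a-1)) (map (\<lambda>j. G j (i j)) [a..<b]) \<in> carrier_mat (r (a-1)) (r (b-1))"
  using assms(2-5)
proof (induction "b - a" arbitrary: a)
  case 0
  then have "a = b" by simp
  then show ?case by simp
next
  case (Suc x)
  then have ab: "a < b" by simp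
  have Ga: "G a (i a) \<in> carrier_mat (r (a-1)) (r a)"
    using cd Suc.prems ab unfolding core_dims_def by auto
  have IH: "mprod (r (Suc a - 1)) (map (\<lambda>j. G j (i j)) [Suc a..<b]) \<in> carrier_mat (r (Suc a - 1)) (r (b-1))"
    using Suc.hyps(1)[of "Suc a"] Suc.hyps(2) Suc.prems ab by auto
  show ?case using mprod_Cons_upt[where G=G and i=i and r=r and a=a, OF ab Ga, of "r (a-1)" "[]"] IH Ga by auto
qed

lemma mprod_app:
  assumes cd: "core_dims d n r G" and "1 \<le> a" "a \<le> k" "k \<le> Suc d"
    and idx: "\<forall>j. a \<le> j \<longrightarrow> j < k \<longrightarrow> i j < n j"
    and R: "mprod (r (k-1)) rest \<in> carrier_mat (r (k-1)) c"
  shows "mprod (r (a-1)) (map (\<lambda>j. G j (i j)) [a..<k] @ rest) = mprod (r (a-1)) (map (\<lambda>j. G j (i j)) [a..<k]) * mprod (r (k-1)) rest"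
  using assms(2-5)
proof (induction "k - a" arbitrary: a)
  case 0
  then have "a = k" by simp
  then show ?case using R by simp
next
  case (Suc x)
  then have ab: "a < k" by simp
  have Ga: "G a (i a) \<in> carrier_mat (r (a-1)) (r a)"
    using cd Suc.prems ab unfolding core_dims_def by auto
  have IH: "mprod (r a) (map (\<lambda>j. G j (i j)) [Suc a..<k] @ rest) = mprod (r a) (map (\<lambda>j. G j (i j)) [Suc a..<k]) * mprod (r (k-1)) rest"
    using Suc.hyps(1)[of "Suc a"] Suc.hyps(2) Suc.prems ab by auto
  have C: "mprod (r a) (map (\<lambda>j. G j (i j)) [Suc a..<k]) \<in> carrier_mat (r a) (r (k-1))"
    using mprod_carrier[OF cd, of "Suc a" k i] Suc.prems ab by auto
  have E: "mprod (r (a-1)) (map (\<lambda>j. G j (i j)) [a..<k] @ rest) = G a (i a) * mprod (r a) (map (\<lambda>j. G j (i j)) [Suc a..<k] @ rest)"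
    by (rule mprod_Cons_upt[where G=G and i=i and r=r and a=a, OF ab Ga])
  have E2: "mprod (r (a-1)) (map (\<lambda>j. G j (i j)) [a..<k]) = G a (i a) * mprod (r a) (map (\<lambda>j. G j (i j)) [Suc a..<k])"
    using mprod_Cons_upt[where G=G and i=i and r=r and a=a, OF ab Ga, of "r (a-1)" "[]"] by simp
  show ?case unfolding E E2 IH by (rule assoc_mult_mat[OF Ga C R, symmetric])
qed

fun ncols :: "nat \<Rightarrow> (nat \<Rightarrow> nat) \<Rightarrow> nat \<Rightarrow> nat" where
  "ncols d n 0 = 1"
| "ncols d n (Suc m) = ncols d n m * n (d - m)"

lemma XgeT_dims:
  assumes "r d = 1"
  shows "dim_row (XgeT d n r G m) = r (d - m) \<and> dim_col (XgeT d n r G m) = ncols d n m"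
  using assms by (induction m) (auto simp: rightU_def kron_def)

lemma mult_entry:
  assumes "i < dim_row A" "j < dim_col B" "dim_row B = dim_col A"
  shows "(A * B) $$ (i,j) = (\<Sum>l<dim_col A. A $$ (i,l) * B $$ (l,j))"
  using assms by (simp add: scalar_prod_def lessThan_atLeast0)

lemma XgeT_step:
  assumes rd: "r d = 1" and m: "m < d" and np: "0 < n (d-m)"
    and al: "\<alpha> < r (d - m - 1)" and q: "q < ncols d n m * n (d-m)"
  shows "XgeT d n r G (Suc m) $$ (\<alpha>,q) =
    (\<Sum>\<beta><r (d-m). G (d-m) (q mod n (d-m)) $$ (\<alpha>,\<beta>) * XgeT d n r G m $$ (\<beta>, q div n (d-m)))"
proof -
  define k where "k = d - m"
  define A where "A = XgeT d n r G m"
  have dA: "dim_row A = r k" "dim_col A = ncols d n m" using XgeT_dims[where r=r and d=d and n=n and G=G and m=m, OF rd] unfolding A_def k_def by auto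
  have eqX: "XgeT d n r G (Suc m) = rightU r n G k * kron A (1\<^sub>m (n k))" unfolding A_def k_def by simp
  have "XgeT d n r G (Suc m) $$ (\<alpha>,q) = (rightU r n G k * kron A (1\<^sub>m (n k))) $$ (\<alpha>,q)"
    by (simp only: eqX)
  also have "\<dots> = (\<Sum>l<n k * r k. rightU r n G k $$ (\<alpha>,l) * kron A (1\<^sub>m (n k)) $$ (l,q))"
    using al q dA by (subst mult_entry) (auto simp: rightU_def kron_def k_def mult.commute)
  also have "\<dots> = (\<Sum>\<beta><r k. \<Sum>y<n k. rightU r n G k $$ (\<alpha>,y + n k * \<beta>) * kron A (1\<^sub>m (n k)) $$ (y + n k * \<beta>,q))"
    by (rule sum_split)
  also have "\<dots> = (\<Sum>\<beta><r k. \<Sum>y<n k. G k y $$ (\<alpha>,\<beta>) * (A $$ (\<beta>, q div n k) * (if y = q mod n k then 1 else 0)))"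
  proof (intro sum.cong refl)
    fix \<beta> y assume b: "\<beta> \<in> {..<r k}" and y: "y \<in> {..<n k}"
    have "y + n k * \<beta> < n k * Suc \<beta>" using y by simp
    also have "\<dots> \<le> n k * r k" using b by (intro mult_le_mono2) simp
    finally have l: "y + n k * \<beta> < n k * r k" .
    have "q mod n k < n k" using np k_def by simp
    moreover have "q div n k < ncols d n m" using q k_def by (simp add: less_mult_imp_div_less)
    ultimately show "rightU r n G k $$ (\<alpha>,y + n k * \<beta>) * kron A (1\<^sub>m (n k)) $$ (y + n k * \<beta>,q) = G k y $$ (\<alpha>,\<beta>) * (A $$ (\<beta>, q div n k) * (if y = q mod n k then 1 else 0))"
      using b y l al q dA np unfolding rightU_def kron_def k_def
      by (auto simp: mult.commute)
  qed
  also have "\<dots> = (\<Sum>\<beta><r k. G k (q mod n k) $$ (\<alpha>,\<beta>) * A $$ (\<beta>, q div n k))"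
  proof (intro sum.cong refl)
    fix \<beta>
    have "q mod n k \<in> {..<n k}" using np k_def by simp
    then show "(\<Sum>y<n k. G k y $$ (\<alpha>,\<beta>) * (A $$ (\<beta>, q div n k) * (if y = q mod n k then 1 else 0))) = G k (q mod n k) $$ (\<alpha>,\<beta>) * A $$ (\<beta>, q div n k)"
      by (simp add: if_distrib[of "\<lambda>x. _ * x"] cong: if_cong)
  qed
  finally show ?thesis unfolding A_def k_def .
qed

lemma idx_bound: "y < (a::nat) \<Longrightarrow> x < b \<Longrightarrow> y + a*x < a*b"
proof -
  assume y: "y < a" and x: "x < b"
  have "y + a * x < a * Suc x" using y by simp
  also have "\<dots> \<le> a * b" using x by (intro mult_le_mono2) simp
  finally show ?thesis .
qed

lemma rightU_prod_entry:
  assumes "0 < n k" "\<alpha> < r (k-1)" "\<alpha>' < r (k-1)"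
  shows "(rightU r n G k * transpose_mat (rightU r n G k)) $$ (\<alpha>,\<alpha>') =
     (\<Sum>\<beta><r k. \<Sum>y<n k. G k y $$ (\<alpha>,\<beta>) * G k y $$ (\<alpha>',\<beta>))"
proof -
  have "(rightU r n G k * transpose_mat (rightU r n G k)) $$ (\<alpha>,\<alpha>') =
     (\<Sum>l<n k * r k. rightU r n G k $$ (\<alpha>,l) * transpose_mat (rightU r n G k) $$ (l,\<alpha>'))"
    using assms by (subst mult_entry) (auto simp: rightU_def)
  also have "\<dots> = (\<Sum>\<beta><r k. \<Sum>y<n k. rightU r n G k $$ (\<alpha>,y + n k * \<beta>) * transpose_mat (rightU r n G k) $$ (y + n k * \<beta>,\<alpha>'))"
    by (rule sum_split)
  also have "\<dots> = (\<Sum>\<beta><r k. \<Sum>y<n k. G k y $$ (\<alpha>,\<beta>) * G k y $$ (\<alpha>',\<beta>))"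
  proof (intro sum.cong refl)
    fix \<beta> y assume b: "\<beta> \<in> {..<r k}" and y: "y \<in> {..<n k}"
    have l: "y + n k * \<beta> < n k * r k" using b y idx_bound by simp
    show "rightU r n G k $$ (\<alpha>,y + n k * \<beta>) * transpose_mat (rightU r n G k) $$ (y + n k * \<beta>,\<alpha>') = G k y $$ (\<alpha>,\<beta>) * G k y $$ (\<alpha>',\<beta>)"
      using l assms y by (simp add: rightU_def)
  qed
  finally show ?thesis .
qed

lemma leftU_prod_entry:
  assumes "0 < r (k-1)" "\<gamma> < r k" "\<beta> < r k"
  shows "(transpose_mat (leftU r n A k) * leftU r n B k) $$ (\<gamma>,\<beta>) =
     (\<Sum>x<n k. \<Sum>\<alpha><r (k-1). A k x $$ (\<alpha>,\<gamma>) * B k x $$ (\<alpha>,\<beta>))"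
proof -
  have "(transpose_mat (leftU r n A k) * leftU r n B k) $$ (\<gamma>,\<beta>) =
     (\<Sum>p<r (k-1) * n k. transpose_mat (leftU r n A k) $$ (\<gamma>,p) * leftU r n B k $$ (p,\<beta>))"
    using assms by (subst mult_entry) (auto simp: leftU_def)
  also have "\<dots> = (\<Sum>x<n k. \<Sum>\<alpha><r (k-1). transpose_mat (leftU r n A k) $$ (\<gamma>,\<alpha> + r (k-1) * x) * leftU r n B k $$ (\<alpha> + r (k-1) * x,\<beta>))"
    by (rule sum_split)
  also have "\<dots> = (\<Sum>x<n k. \<Sum>\<alpha><r (k-1). A k x $$ (\<alpha>,\<gamma>) * B k x $$ (\<alpha>,\<beta>))"
  proof (intro sum.cong refl)
    fix x \<alpha> assume x: "x \<in> {..<n k}" and a: "\<alpha> \<in> {..<r (k-1)}"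
    have l: "\<alpha> + r (k-1) * x < r (k-1) * n k" using x a idx_bound by simp
    show "transpose_mat (leftU r n A k) $$ (\<gamma>,\<alpha> + r (k-1) * x) * leftU r n B k $$ (\<alpha> + r (k-1) * x,\<beta>) = A k x $$ (\<alpha>,\<gamma>) * B k x $$ (\<alpha>,\<beta>)"
      using l assms a by (simp add: leftU_def)
  qed
  finally show ?thesis .
qed

lemma XgeT_char:
  assumes rd: "r d = 1" and cd: "core_dims d n r G" and np: "\<forall>j\<in>{1..d}. 0 < n j"
  shows "m < d \<Longrightarrow> \<alpha> < r (d-m) \<Longrightarrow> q < ncols d n m \<Longrightarrow>
    XgeT d n r G m $$ (\<alpha>,q) = mprod (r (d-m)) (map (\<lambda>j. G j (colex_decode n (Suc (d-m)) q j)) [Suc (d-m)..<Suc d]) $$ (\<alpha>,0)"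
proof (induction m arbitrary: \<alpha> q)
  case 0
  then show ?case using rd by simp
next
  case (Suc m)
  define k where "k = d - m"
  have k: "2 \<le> k" "k \<le> d" "d - Suc m = k - 1" "Suc (d - Suc m) = k" "d - m = k" using Suc.prems k_def by auto
  have nk: "0 < n k" using np k by auto
  have al: "\<alpha> < r (k-1)" using Suc.prems k by simp
  have q: "q < ncols d n m * n k" using Suc.prems k by simp
  have "XgeT d n r G (Suc m) $$ (\<alpha>,q) = (\<Sum>\<beta><r k. G k (q mod n k) $$ (\<alpha>,\<beta>) * XgeT d n r G m $$ (\<beta>, q div n k))"
    using XgeT_step[of r d m n \<alpha> q G] rd Suc.prems nk al q k by simp
  also have "\<dots> = (\<Sum>\<beta><r k. G k (q mod n k) $$ (\<alpha>,\<beta>) * mprod (r k) (map (\<lambda>j. G j (colex_decode n (Suc k) (q div n k) j)) [Suc k..<Suc d]) $$ (\<beta>,0))"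
  proof (intro sum.cong refl)
    fix \<beta> assume "\<beta> \<in> {..<r k}"
    moreover have "q div n k < ncols d n m" using q by (simp add: less_mult_imp_div_less)
    ultimately show "G k (q mod n k) $$ (\<alpha>,\<beta>) * XgeT d n r G m $$ (\<beta>, q div n k) = G k (q mod n k) $$ (\<alpha>,\<beta>) * mprod (r k) (map (\<lambda>j. G j (colex_decode n (Suc k) (q div n k) j)) [Suc k..<Suc d]) $$ (\<beta>,0)"
      using Suc.IH[of \<beta> "q div n k"] Suc.prems k by simp
  qed
  also have "\<dots> = (G k (q mod n k) * mprod (r k) (map (\<lambda>j. G j (colex_decode n (Suc k) (q div n k) j)) [Suc k..<Suc d])) $$ (\<alpha>,0)"
  proof -
    have G: "G k (q mod n k) \<in> carrier_mat (r (k-1)) (r k)" using cd k nk unfolding core_dims_def by auto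
    have M: "mprod (r (Suc k - 1)) (map (\<lambda>j. G j (colex_decode n (Suc k) (q div n k) j)) [Suc k..<Suc d]) \<in> carrier_mat (r (Suc k - 1)) (r (Suc d - 1))"
      by (rule mprod_carrier[OF cd]) (use k np in \<open>auto simp: colex_decode_def\<close>)
    show ?thesis using G M rd al by (subst mult_entry) auto
  qed
  also have "\<dots> = mprod (r (k-1)) (map (\<lambda>j. G j (colex_decode n k q j)) [k..<Suc d]) $$ (\<alpha>,0)"
  proof -
    have G: "G k (colex_decode n k q k) \<in> carrier_mat (r (k-1)) (r k)" using cd k nk unfolding core_dims_def cd_self by auto
    have "mprod (r (k-1)) (map (\<lambda>j. G j (colex_decode n k q j)) [k..<Suc d]) =
       G k (colex_decode n k q k) * mprod (r k) (map (\<lambda>j. G j (colex_decode n k q j)) [Suc k..<Suc d])"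
      using mprod_Cons_upt[where G=G and i="colex_decode n k q" and r=r and a=k, OF _ G, of "Suc d" "r (k-1)" "[]"] k by simp
    also have "map (\<lambda>j. G j (colex_decode n k q j)) [Suc k..<Suc d] = map (\<lambda>j. G j (colex_decode n (Suc k) (q div n k) j)) [Suc k..<Suc d]"
      by (rule map_cong[OF refl]) (metis atLeastLessThan_iff cd_shift less_eq_Suc_le set_upt)
    finally show ?thesis by (simp add: cd_self)
  qed
  finally show ?case using k by simp
qed

lemma XgeT_orth:
  assumes rd: "r d = 1" and ro: "right_orth d n r G" and np: "\<forall>j\<in>{1..d}. 0 < n j"
  shows "m < d \<Longrightarrow> XgeT d n r G m * transpose_mat (XgeT d n r G m) = 1\<^sub>m (r (d-m))"
proof (induction m)
  case 0
  then show ?case using rd by simp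
next
  case (Suc m)
  define k where "k = d - m"
  have k: "2 \<le> k" "k \<le> d" "d - Suc m = k - 1" "d - m = k" using Suc.prems k_def by auto
  have nk: "0 < n k" using np k by auto
  define X where "X = XgeT d n r G (Suc m)"
  define A where "A = XgeT d n r G m"
  have dX: "dim_row X = r (k-1)" "dim_col X = ncols d n m * n k"
    using XgeT_dims[where r=r and d=d and n=n and G=G and m="Suc m", OF rd] k unfolding X_def by auto
  have dA: "dim_row A = r k" "dim_col A = ncols d n m"
    using XgeT_dims[where r=r and d=d and n=n and G=G and m="m", OF rd] k unfolding A_def by auto
  have IH: "\<And>\<beta> \<beta>'. \<beta> < r k \<Longrightarrow> \<beta>' < r k \<Longrightarrow> (\<Sum>x<ncols d n m. A $$ (\<beta>,x) * A $$ (\<beta>',x)) = (if \<beta> = \<beta>' then 1 else 0)"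
  proof -
    fix \<beta> \<beta>' assume b: "\<beta> < r k" "\<beta>' < r k"
    have "(A * transpose_mat A) $$ (\<beta>,\<beta>') = (\<Sum>x<ncols d n m. A $$ (\<beta>,x) * A $$ (\<beta>',x))"
      using b dA by (subst mult_entry) auto
    moreover have "A * transpose_mat A = 1\<^sub>m (r k)" using Suc k unfolding A_def by simp
    ultimately show "(\<Sum>x<ncols d n m. A $$ (\<beta>,x) * A $$ (\<beta>',x)) = (if \<beta> = \<beta>' then 1 else 0)"
      using b by simp
  qed
  have RO: "\<And>\<alpha> \<alpha>'. \<alpha> < r (k-1) \<Longrightarrow> \<alpha>' < r (k-1) \<Longrightarrow> (\<Sum>\<beta><r k. \<Sum>y<n k. G k y $$ (\<alpha>,\<beta>) * G k y $$ (\<alpha>',\<beta>)) = (if \<alpha> = \<alpha>' then 1 else 0)"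
  proof -
    fix \<alpha> \<alpha>' assume a: "\<alpha> < r (k-1)" "\<alpha>' < r (k-1)"
    have "rightU r n G k * transpose_mat (rightU r n G k) = 1\<^sub>m (r (k-1))"
      using ro k unfolding right_orth_def by auto
    then show "(\<Sum>\<beta><r k. \<Sum>y<n k. G k y $$ (\<alpha>,\<beta>) * G k y $$ (\<alpha>',\<beta>)) = (if \<alpha> = \<alpha>' then 1 else 0)"
      using rightU_prod_entry[where n=n and k=k and r=r and G=G, OF nk a] a by simp
  qed
  have XE: "\<And>\<alpha> y x. \<alpha> < r (k-1) \<Longrightarrow> y < n k \<Longrightarrow> x < ncols d n m \<Longrightarrow>
     X $$ (\<alpha>, y + n k * x) = (\<Sum>\<beta><r k. G k y $$ (\<alpha>,\<beta>) * A $$ (\<beta>, x))"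
  proof -
    fix \<alpha> y x assume a: "\<alpha> < r (k-1)" and y: "y < n k" and x: "x < ncols d n m"
    have q: "y + n k * x < ncols d n m * n k" using idx_bound[OF y x] by (simp add: mult.commute)
    show "X $$ (\<alpha>, y + n k * x) = (\<Sum>\<beta><r k. G k y $$ (\<alpha>,\<beta>) * A $$ (\<beta>, x))"
      using XgeT_step[of r d m n \<alpha> "y + n k * x" G] rd Suc.prems nk a q k y unfolding X_def A_def by simp
  qed
  show ?case
  proof (rule eq_matI)
    fix \<alpha> \<alpha>' assume "\<alpha> < dim_row (1\<^sub>m (r (d - Suc m)))" "\<alpha>' < dim_col (1\<^sub>m (r (d - Suc m)))"
    then have a: "\<alpha> < r (k-1)" "\<alpha>' < r (k-1)" using k by auto
    have "(X * transpose_mat X) $$ (\<alpha>,\<alpha>') = (\<Sum>q<n k * ncols d n m. X $$ (\<alpha>,q) * X $$ (\<alpha>',q))"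
      using a dX by (subst mult_entry) (auto simp: mult.commute)
    also have "\<dots> = (\<Sum>x<ncols d n m. \<Sum>y<n k. X $$ (\<alpha>,y + n k * x) * X $$ (\<alpha>',y + n k * x))"
      by (rule sum_split)
    also have "\<dots> = (\<Sum>x<ncols d n m. \<Sum>y<n k. \<Sum>\<beta><r k. \<Sum>\<beta>'<r k. (G k y $$ (\<alpha>,\<beta>) * G k y $$ (\<alpha>',\<beta>')) * (A $$ (\<beta>, x) * A $$ (\<beta>', x)))"
    proof (intro sum.cong refl)
      fix x y assume x: "x \<in> {..<ncols d n m}" and y: "y \<in> {..<n k}"
      show "X $$ (\<alpha>,y + n k * x) * X $$ (\<alpha>',y + n k * x) = (\<Sum>\<beta><r k. \<Sum>\<beta>'<r k. (G k y $$ (\<alpha>,\<beta>) * G k y $$ (\<alpha>',\<beta>')) * (A $$ (\<beta>, x) * A $$ (\<beta>', x)))"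
      proof -
        have x': "x < ncols d n m" and y': "y < n k" using x y by auto
        show ?thesis unfolding XE[OF a(1) y' x'] XE[OF a(2) y' x'] sum_product by (simp add: mult_ac)
      qed
    qed
    also have "\<dots> = (\<Sum>y<n k. \<Sum>\<beta><r k. \<Sum>\<beta>'<r k. \<Sum>x<ncols d n m. (G k y $$ (\<alpha>,\<beta>) * G k y $$ (\<alpha>',\<beta>')) * (A $$ (\<beta>, x) * A $$ (\<beta>', x)))"
      by (rule trans[OF sum.swap], rule sum.cong[OF refl], rule trans[OF sum.swap], rule sum.cong[OF refl], rule sum.swap)
    also have "\<dots> = (\<Sum>y<n k. \<Sum>\<beta><r k. \<Sum>\<beta>'<r k. (G k y $$ (\<alpha>,\<beta>) * G k y $$ (\<alpha>',\<beta>')) * (if \<beta> = \<beta>' then 1 else 0))"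
      by (intro sum.cong refl) (simp add: sum_distrib_left[symmetric] IH)
    also have "\<dots> = (\<Sum>y<n k. \<Sum>\<beta><r k. G k y $$ (\<alpha>,\<beta>) * G k y $$ (\<alpha>',\<beta>))"
      by (intro sum.cong refl) (simp add: if_distrib[of "\<lambda>x. _ * x"] cong: if_cong)
    also have "\<dots> = (if \<alpha> = \<alpha>' then 1 else 0)"
      using RO[OF a] by (subst sum.swap) simp
    finally show "(XgeT d n r G (Suc m) * transpose_mat (XgeT d n r G (Suc m))) $$ (\<alpha>,\<alpha>') = 1\<^sub>m (r (d - Suc m)) $$ (\<alpha>,\<alpha>')"
      using a k unfolding X_def by simp
  next
    show "dim_row (XgeT d n r G (Suc m) * transpose_mat (XgeT d n r G (Suc m))) = dim_row (1\<^sub>m (r (d - Suc m)))"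
      using dX k unfolding X_def by simp
    show "dim_col (XgeT d n r G (Suc m) * transpose_mat (XgeT d n r G (Suc m))) = dim_col (1\<^sub>m (r (d - Suc m)))"
      using dX k unfolding X_def by simp
  qed
qed

lemma ND:
  assumes rd: "r d = 1" and ro: "right_orth d n r G" and np: "\<forall>j\<in>{1..d}. 0 < n j"
    and cd: "core_dims d n r G" and a: "1 \<le> a" "a < d"
    and H: "\<forall>i\<in>tt_index d n. (\<Sum>\<delta><r a. v \<delta> * mprod (r a) (map (\<lambda>j. G j (i j)) [Suc a..<Suc d]) $$ (\<delta>,0)) = 0"
    and de: "\<delta> < r a"
  shows "v \<delta> = 0"
proof -
  define m where "m = d - a"
  have m: "m < d" "d - m = a" using a m_def by auto
  define X where "X = XgeT d n r G m"
  have Z: "(\<Sum>\<delta>'<r a. v \<delta>' * X $$ (\<delta>',q)) = 0" if q: "q < ncols d n m" for q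
  proof -
    define iq where "iq = (\<lambda>j. if j \<in> {Suc a..d} then colex_decode n (Suc a) q j else 0)"
    have iq: "iq \<in> tt_index d n" unfolding tt_index_def iq_def using np a
      by (auto simp: colex_decode_def)
    have mp: "map (\<lambda>j. G j (iq j)) [Suc a..<Suc d] = map (\<lambda>j. G j (colex_decode n (Suc a) q j)) [Suc a..<Suc d]"
      by (rule map_cong[OF refl]) (auto simp: iq_def)
    have "(\<Sum>\<delta>'<r a. v \<delta>' * X $$ (\<delta>',q)) = (\<Sum>\<delta>'<r a. v \<delta>' * mprod (r a) (map (\<lambda>j. G j (iq j)) [Suc a..<Suc d]) $$ (\<delta>',0))"
    proof (intro sum.cong refl)
      fix \<delta>' assume "\<delta>' \<in> {..<r a}"
      then show "v \<delta>' * X $$ (\<delta>',q) = v \<delta>' * mprod (r a) (map (\<lambda>j. G j (iq j)) [Suc a..<Suc d]) $$ (\<delta>',0)"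
        using XgeT_char[OF rd cd np m(1), of \<delta>' q] q m unfolding X_def mp by simp
    qed
    also have "\<dots> = 0" using H iq by blast
    finally show ?thesis .
  qed
  have O: "(\<Sum>q<ncols d n m. X $$ (\<delta>',q) * X $$ (\<delta>,q)) = (if \<delta>' = \<delta> then 1 else 0)" if "\<delta>' < r a" for \<delta>'
  proof -
    have dX: "dim_row X = r a" "dim_col X = ncols d n m"
      using XgeT_dims[where r=r and d=d and n=n and G=G and m=m, OF rd] m unfolding X_def by auto
    have "(X * transpose_mat X) $$ (\<delta>',\<delta>) = (\<Sum>q<ncols d n m. X $$ (\<delta>',q) * X $$ (\<delta>,q))"
      using that de dX by (subst mult_entry) auto
    moreover have "X * transpose_mat X = 1\<^sub>m (r a)" using XgeT_orth[OF rd ro np m(1)] m unfolding X_def by simp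
    ultimately show ?thesis using that de by simp
  qed
  have "v \<delta> = (\<Sum>\<delta>'<r a. v \<delta>' * (if \<delta>' = \<delta> then 1 else 0))"
    using de by (simp add: if_distrib[of "\<lambda>x. _ * x"] cong: if_cong)
  also have "\<dots> = (\<Sum>\<delta>'<r a. v \<delta>' * (\<Sum>q<ncols d n m. X $$ (\<delta>',q) * X $$ (\<delta>,q)))"
    using O by simp
  also have "\<dots> = (\<Sum>q<ncols d n m. (\<Sum>\<delta>'<r a. v \<delta>' * X $$ (\<delta>',q)) * X $$ (\<delta>,q))"
    by (simp add: sum_distrib_left sum_distrib_right mult_ac) (rule sum.swap)
  also have "\<dots> = 0" using Z by simp
  finally show ?thesis .
qed

lemma SQ:
  assumes cU: "core_dims d n r U" and cUt: "core_dims d n r Ut" and Sd: "S d = 1\<^sub>m 1" and rd: "r d = 1"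
    and Sc: "\<forall>k\<le>d. S k \<in> carrier_mat (r k) (r k)"
    and gr: "\<forall>k\<in>{1..d}. \<forall>x<n k. U k x * S k = S (k-1) * Ut k x"
  shows "a \<le> d \<Longrightarrow> (\<forall>j. a < j \<longrightarrow> j \<le> d \<longrightarrow> i j < n j) \<Longrightarrow>
    S a * mprod (r a) (map (\<lambda>j. Ut j (i j)) [Suc a..<Suc d]) = mprod (r a) (map (\<lambda>j. U j (i j)) [Suc a..<Suc d])"
proof (induction "d - a" arbitrary: a)
  case 0
  then have "a = d" by simp
  then show ?case using Sd rd by simp
next
  case (Suc x)
  then have ad: "a < d" by simp
  have x: "i (Suc a) < n (Suc a)" using Suc.prems ad by simp
  have Ut: "Ut (Suc a) (i (Suc a)) \<in> carrier_mat (r a) (r (Suc a))" using cUt ad x unfolding core_dims_def by force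
  have Ua: "U (Suc a) (i (Suc a)) \<in> carrier_mat (r a) (r (Suc a))" using cU ad x unfolding core_dims_def by force
  have E1: "mprod (r a) (map (\<lambda>j. Ut j (i j)) [Suc a..<Suc d]) = Ut (Suc a) (i (Suc a)) * mprod (r (Suc a)) (map (\<lambda>j. Ut j (i j)) [Suc (Suc a)..<Suc d])"
    using mprod_Cons_upt[where G=Ut and i=i and r=r and a="Suc a", OF _ Ut, of "Suc d" "r a" "[]"] ad by simp
  have E2: "mprod (r a) (map (\<lambda>j. U j (i j)) [Suc a..<Suc d]) = U (Suc a) (i (Suc a)) * mprod (r (Suc a)) (map (\<lambda>j. U j (i j)) [Suc (Suc a)..<Suc d])"
    using mprod_Cons_upt[where G=U and i=i and r=r and a="Suc a", OF _ Ua, of "Suc d" "r a" "[]"] ad by simp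
  have Q: "mprod (r (Suc (Suc a) - 1)) (map (\<lambda>j. Ut j (i j)) [Suc (Suc a)..<Suc d]) \<in> carrier_mat (r (Suc (Suc a) - 1)) (r (Suc d - 1))"
    by (rule mprod_carrier[OF cUt]) (use Suc.prems ad in auto)
  then have Q': "mprod (r (Suc a)) (map (\<lambda>j. Ut j (i j)) [Suc (Suc a)..<Suc d]) \<in> carrier_mat (r (Suc a)) (r d)" by simp
  have Sa: "S a \<in> carrier_mat (r a) (r a)" using Sc ad by simp
  have Sa1: "S (Suc a) \<in> carrier_mat (r (Suc a)) (r (Suc a))" using Sc ad by simp
  have g: "U (Suc a) (i (Suc a)) * S (Suc a) = S a * Ut (Suc a) (i (Suc a))" using gr ad x by force
  have IH: "S (Suc a) * mprod (r (Suc a)) (map (\<lambda>j. Ut j (i j)) [Suc (Suc a)..<Suc d]) = mprod (r (Suc a)) (map (\<lambda>j. U j (i j)) [Suc (Suc a)..<Suc d])"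
    using Suc.hyps(1)[of "Suc a"] Suc.hyps(2) Suc.prems ad by auto
  have "S a * (Ut (Suc a) (i (Suc a)) * mprod (r (Suc a)) (map (\<lambda>j. Ut j (i j)) [Suc (Suc a)..<Suc d]))
      = (S a * Ut (Suc a) (i (Suc a))) * mprod (r (Suc a)) (map (\<lambda>j. Ut j (i j)) [Suc (Suc a)..<Suc d])"
    by (rule assoc_mult_mat[OF Sa Ut Q', symmetric])
  also have "\<dots> = (U (Suc a) (i (Suc a)) * S (Suc a)) * mprod (r (Suc a)) (map (\<lambda>j. Ut j (i j)) [Suc (Suc a)..<Suc d])"
    by (simp only: g)
  also have "\<dots> = U (Suc a) (i (Suc a)) * (S (Suc a) * mprod (r (Suc a)) (map (\<lambda>j. Ut j (i j)) [Suc (Suc a)..<Suc d]))"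
    by (rule assoc_mult_mat[OF Ua Sa1 Q'])
  finally show ?case unfolding E1 E2 IH .
qed

definition Pm :: "(nat \<Rightarrow> nat) \<Rightarrow> (nat \<Rightarrow> nat \<Rightarrow> real mat) \<Rightarrow> (nat \<Rightarrow> nat) \<Rightarrow> nat \<Rightarrow> nat \<Rightarrow> real mat" where
  "Pm r U i a k = mprod (r (a-1)) (map (\<lambda>j. U j (i j)) [a..<k])"

definition Qm :: "nat \<Rightarrow> (nat \<Rightarrow> nat) \<Rightarrow> (nat \<Rightarrow> nat \<Rightarrow> real mat) \<Rightarrow> (nat \<Rightarrow> nat) \<Rightarrow> nat \<Rightarrow> real mat" where
  "Qm d r G i k = mprod (r k) (map (\<lambda>j. G j (i j)) [Suc k..<Suc d])"

definition Tm :: "nat \<Rightarrow> (nat \<Rightarrow> nat) \<Rightarrow> (nat \<Rightarrow> nat \<Rightarrow> real mat) \<Rightarrow> (nat \<Rightarrow> nat \<Rightarrow> real mat) \<Rightarrow> (nat \<Rightarrow> nat \<Rightarrow> real mat)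
   \<Rightarrow> (nat \<Rightarrow> nat) \<Rightarrow> nat \<Rightarrow> nat \<Rightarrow> real" where
  "Tm d r U Ut W i a \<alpha> = (\<Sum>k\<in>{a..d}. (Pm r U i a k * (W k (i k) * Qm d r Ut i k)) $$ (\<alpha>,0))"

lemma tt_idx: "i \<in> tt_index d n \<Longrightarrow> j \<in> {1..d} \<Longrightarrow> i j < n j"
  unfolding tt_index_def by auto

lemma tt_upd: "i \<in> tt_index d n \<Longrightarrow> a \<in> {1..d} \<Longrightarrow> x < n a \<Longrightarrow> i(a := x) \<in> tt_index d n"
  unfolding tt_index_def by auto

lemma Pm_carrier: "core_dims d n r U \<Longrightarrow> i \<in> tt_index d n \<Longrightarrow> 1 \<le> a \<Longrightarrow> a \<le> k \<Longrightarrow> k \<le> d \<Longrightarrow>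
  Pm r U i a k \<in> carrier_mat (r (a-1)) (r (k-1))"
  unfolding Pm_def by (rule mprod_carrier) (auto simp: tt_index_def)

lemma Qm_carrier: "core_dims d n r G \<Longrightarrow> i \<in> tt_index d n \<Longrightarrow> r d = 1 \<Longrightarrow> k \<le> d \<Longrightarrow>
  Qm d r G i k \<in> carrier_mat (r k) 1"
  using mprod_carrier[of d n r G "Suc k" "Suc d" i] unfolding Qm_def by (auto simp: tt_index_def)

lemma W_carrier: "core_dims d n r W \<Longrightarrow> i \<in> tt_index d n \<Longrightarrow> 1 \<le> k \<Longrightarrow> k \<le> d \<Longrightarrow>
  W k (i k) \<in> carrier_mat (r (k-1)) (r k)"
  unfolding core_dims_def tt_index_def by auto

lemma Tm_local:
  assumes "b < a"
  shows "Tm d r U Ut W (i(b := x)) a \<alpha> = Tm d r U Ut W i a \<alpha>"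
proof -
  have P: "Pm r U (i(b := x)) a k = Pm r U i a k" for k
    unfolding Pm_def by (rule arg_cong[where f="mprod _"], rule map_cong) (use assms in auto)
  have Q: "Qm d r Ut (i(b := x)) k = Qm d r Ut i k" if "a \<le> k" for k
    unfolding Qm_def by (rule arg_cong[where f="mprod _"], rule map_cong) (use assms that in auto)
  show ?thesis unfolding Tm_def
    by (rule sum.cong[OF refl]) (use assms P Q in auto)
qed

lemma Qm_local:
  assumes "b \<le> a"
  shows "Qm d r Ut (i(b := x)) a = Qm d r Ut i a"
  unfolding Qm_def by (rule arg_cong[where f="mprod _"], rule map_cong) (use assms in auto)

lemma swap3:
  fixes f g :: "nat \<Rightarrow> nat \<Rightarrow> real"
  shows "(\<Sum>x\<in>A. \<Sum>\<alpha>\<in>B. f x \<alpha> * (\<Sum>\<delta>\<in>C. g' x \<alpha> \<delta> * h \<delta>)) = (\<Sum>\<delta>\<in>C. (\<Sum>x\<in>A. \<Sum>\<alpha>\<in>B. f x \<alpha> * g' x \<alpha> \<delta>) * h \<delta>)"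
proof -
  have "(\<Sum>x\<in>A. \<Sum>\<alpha>\<in>B. f x \<alpha> * (\<Sum>\<delta>\<in>C. g' x \<alpha> \<delta> * h \<delta>)) = (\<Sum>x\<in>A. \<Sum>\<alpha>\<in>B. \<Sum>\<delta>\<in>C. f x \<alpha> * g' x \<alpha> \<delta> * h \<delta>)"
    by (simp add: sum_distrib_left mult_ac)
  also have "\<dots> = (\<Sum>x\<in>A. \<Sum>\<delta>\<in>C. \<Sum>\<alpha>\<in>B. f x \<alpha> * g' x \<alpha> \<delta> * h \<delta>)"
    by (rule sum.cong[OF refl], rule sum.swap)
  also have "\<dots> = (\<Sum>\<delta>\<in>C. \<Sum>x\<in>A. \<Sum>\<alpha>\<in>B. f x \<alpha> * g' x \<alpha> \<delta> * h \<delta>)"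
    by (rule sum.swap)
  also have "\<dots> = (\<Sum>\<delta>\<in>C. (\<Sum>x\<in>A. \<Sum>\<alpha>\<in>B. f x \<alpha> * g' x \<alpha> \<delta>) * h \<delta>)"
    by (simp add: sum_distrib_right)
  finally show ?thesis .
qed

lemma Trec:
  assumes rd: "r d = 1" and cU: "core_dims d n r U" and cUt: "core_dims d n r Ut" and cW: "core_dims d n r W"
    and i: "i \<in> tt_index d n" and a: "1 \<le> a" "a < d" and al: "\<alpha> < r (a-1)"
  shows "Tm d r U Ut W i a \<alpha> = (\<Sum>\<delta><r a. W a (i a) $$ (\<alpha>,\<delta>) * Qm d r Ut i a $$ (\<delta>,0))
     + (\<Sum>\<beta><r a. U a (i a) $$ (\<alpha>,\<beta>) * Tm d r U Ut W i (Suc a) \<beta>)"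
proof -
  have Wa: "W a (i a) \<in> carrier_mat (r (a-1)) (r a)" using W_carrier[OF cW i] a by simp
  have Qa: "Qm d r Ut i a \<in> carrier_mat (r a) 1" using Qm_carrier[OF cUt i rd] a by simp
  have Ua: "U a (i a) \<in> carrier_mat (r (a-1)) (r a)" using W_carrier[OF cU i] a by simp
  have "Tm d r U Ut W i a \<alpha> = (Pm r U i a a * (W a (i a) * Qm d r Ut i a)) $$ (\<alpha>,0)
      + (\<Sum>k\<in>{Suc a..d}. (Pm r U i a k * (W k (i k) * Qm d r Ut i k)) $$ (\<alpha>,0))"
    unfolding Tm_def using a by (simp add: sum.atLeast_Suc_atMost)
  also have "(Pm r U i a a * (W a (i a) * Qm d r Ut i a)) $$ (\<alpha>,0) = (\<Sum>\<delta><r a. W a (i a) $$ (\<alpha>,\<delta>) * Qm d r Ut i a $$ (\<delta>,0))"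
    using Wa Qa al by (simp add: Pm_def scalar_prod_def lessThan_atLeast0)
  also have "(\<Sum>k\<in>{Suc a..d}. (Pm r U i a k * (W k (i k) * Qm d r Ut i k)) $$ (\<alpha>,0))
     = (\<Sum>k\<in>{Suc a..d}. \<Sum>\<beta><r a. U a (i a) $$ (\<alpha>,\<beta>) * (Pm r U i (Suc a) k * (W k (i k) * Qm d r Ut i k)) $$ (\<beta>,0))"
  proof (rule sum.cong[OF refl])
    fix k assume k: "k \<in> {Suc a..d}"
    have P: "Pm r U i (Suc a) k \<in> carrier_mat (r a) (r (k-1))" using Pm_carrier[OF cU i, of "Suc a" k] k by simp
    have Wk: "W k (i k) \<in> carrier_mat (r (k-1)) (r k)" using W_carrier[OF cW i] k a by simp
    have Qk: "Qm d r Ut i k \<in> carrier_mat (r k) 1" using Qm_carrier[OF cUt i rd] k by simp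
    have E: "Pm r U i a k = U a (i a) * Pm r U i (Suc a) k"
      unfolding Pm_def using mprod_Cons_upt[where G=U and i=i and r=r and a=a, OF _ Ua, of k "r (a-1)" "[]"] k by simp
    have "(Pm r U i a k * (W k (i k) * Qm d r Ut i k)) = U a (i a) * (Pm r U i (Suc a) k * (W k (i k) * Qm d r Ut i k))"
      unfolding E using Ua P Wk Qk by (simp add: assoc_mult_mat[OF Ua P, of _ 1])
    then show "(Pm r U i a k * (W k (i k) * Qm d r Ut i k)) $$ (\<alpha>,0) = (\<Sum>\<beta><r a. U a (i a) $$ (\<alpha>,\<beta>) * (Pm r U i (Suc a) k * (W k (i k) * Qm d r Ut i k)) $$ (\<beta>,0))"
      using Ua P Wk Qk al by (simp add: scalar_prod_def lessThan_atLeast0)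
  qed
  also have "\<dots> = (\<Sum>\<beta><r a. U a (i a) $$ (\<alpha>,\<beta>) * Tm d r U Ut W i (Suc a) \<beta>)"
    unfolding Tm_def by (subst sum.swap) (simp add: sum_distrib_left)
  finally show ?thesis .
qed

lemma sum_sq_zero:
  fixes f :: "nat \<Rightarrow> nat \<Rightarrow> real"
  assumes "(\<Sum>x<N. \<Sum>\<alpha><M. f x \<alpha> * f x \<alpha>) = 0" "x < N" "\<alpha> < M"
  shows "f x \<alpha> = 0"
proof -
  have nn: "\<And>x. 0 \<le> (\<Sum>\<alpha><M. f x \<alpha> * f x \<alpha>)" by (intro sum_nonneg) simp
  have "(\<Sum>\<alpha><M. f x \<alpha> * f x \<alpha>) = 0"
    using assms(1) sum_nonneg_eq_0_iff[of "{..<N}" "\<lambda>x. \<Sum>\<alpha><M. f x \<alpha> * f x \<alpha>"] nn assms(2) by auto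
  then have "f x \<alpha> * f x \<alpha> = 0"
    using sum_nonneg_eq_0_iff[of "{..<M}" "\<lambda>\<alpha>. f x \<alpha> * f x \<alpha>"] assms(3) by auto
  then show ?thesis by simp
qed

lemma peel:
  assumes rd: "r d = 1" and np: "\<forall>j\<in>{1..d}. 0 < n j"
    and cU: "core_dims d n r U" and cUt: "core_dims d n r Ut" and cW: "core_dims d n r W"
    and ro: "right_orth d n r Ut"
    and LO: "\<forall>k\<in>{1..d-1}. \<forall>\<gamma><r k. \<forall>\<beta><r k. (\<Sum>x<n k. \<Sum>\<alpha><r (k-1). U k x $$ (\<alpha>,\<gamma>) * U k x $$ (\<alpha>,\<beta>)) = (if \<gamma> = \<beta> then 1 else 0)"
    and GC: "\<forall>k\<in>{1..d-1}. \<forall>\<gamma><r k. \<forall>\<beta><r k. (\<Sum>x<n k. \<Sum>\<alpha><r (k-1). W k x $$ (\<alpha>,\<gamma>) * U k x $$ (\<alpha>,\<beta>)) = 0"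
  shows "1 \<le> a \<Longrightarrow> a \<le> d \<Longrightarrow> (\<forall>i\<in>tt_index d n. \<forall>\<alpha><r (a-1). Tm d r U Ut W i a \<alpha> = 0) \<Longrightarrow>
     \<forall>k\<in>{a..d}. \<forall>x<n k. \<forall>\<alpha><r (k-1). \<forall>\<gamma><r k. W k x $$ (\<alpha>,\<gamma>) = 0"
proof (induction "d - a" arbitrary: a)
  case 0
  then have ad: "a = d" by simp
  show ?case
  proof (intro ballI allI impI)
    fix k x \<alpha> \<gamma> assume k: "k \<in> {a..d}" and x: "x < n k" and al: "\<alpha> < r (k-1)" and g: "\<gamma> < r k"
    have kd: "k = d" using k ad by simp
    define i0 where "i0 = (\<lambda>j::nat. if j = d then x else 0)"
    have i0: "i0 \<in> tt_index d n" unfolding tt_index_def i0_def using np x kd 0 by auto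
    have "Tm d r U Ut W i0 d \<alpha> = (Pm r U i0 d d * (W d (i0 d) * Qm d r Ut i0 d)) $$ (\<alpha>,0)"
      unfolding Tm_def by simp
    also have "\<dots> = W d x $$ (\<alpha>,0)"
      using W_carrier[OF cW i0, of d] 0 rd unfolding Pm_def Qm_def i0_def by simp
    finally have "W d x $$ (\<alpha>,0) = 0" using 0 i0 al kd ad by auto
    then show "W k x $$ (\<alpha>,\<gamma>) = 0" using g kd rd by simp
  qed
next
  case (Suc y)
  then have a: "1 \<le> a" "a < d" by auto
  have H: "\<forall>i\<in>tt_index d n. \<forall>\<alpha><r (a-1). Tm d r U Ut W i a \<alpha> = 0" using Suc.prems by simp
  have aset: "a \<in> {1..d}" "a \<in> {1..d-1}" using a by auto
  have na: "0 < n a" using np aset by simp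
  have EX: "Tm d r U Ut W (i(a := x)) a \<alpha> = (\<Sum>\<delta><r a. W a x $$ (\<alpha>,\<delta>) * Qm d r Ut i a $$ (\<delta>,0))
     + (\<Sum>\<beta><r a. U a x $$ (\<alpha>,\<beta>) * Tm d r U Ut W i (Suc a) \<beta>)"
    if i: "i \<in> tt_index d n" and x: "x < n a" and al: "\<alpha> < r (a-1)" for i x \<alpha>
    using Trec[OF rd cU cUt cW tt_upd[OF i aset(1) x] a al] Qm_local[of a a d r Ut i x] Tm_local[of a "Suc a" d r U Ut W i x]
    by simp
  have WZ: "W a x $$ (\<alpha>,\<gamma>) = 0" if x: "x < n a" and al: "\<alpha> < r (a-1)" and g: "\<gamma> < r a" for x \<alpha> \<gamma>
  proof -
    define M where "M = (\<lambda>\<gamma> \<delta>. \<Sum>x<n a. \<Sum>\<alpha><r (a-1). W a x $$ (\<alpha>,\<gamma>) * W a x $$ (\<alpha>,\<delta>))"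
    have Z: "(\<Sum>\<delta><r a. M \<gamma> \<delta> * Qm d r Ut i a $$ (\<delta>,0)) = 0" if i: "i \<in> tt_index d n" for i
    proof -
      have "0 = (\<Sum>x<n a. \<Sum>\<alpha><r (a-1). W a x $$ (\<alpha>,\<gamma>) * Tm d r U Ut W (i(a := x)) a \<alpha>)"
        using H tt_upd[OF i aset(1)] by simp
      also have "\<dots> = (\<Sum>x<n a. \<Sum>\<alpha><r (a-1). W a x $$ (\<alpha>,\<gamma>) * (\<Sum>\<delta><r a. W a x $$ (\<alpha>,\<delta>) * Qm d r Ut i a $$ (\<delta>,0)))
          + (\<Sum>x<n a. \<Sum>\<alpha><r (a-1). W a x $$ (\<alpha>,\<gamma>) * (\<Sum>\<beta><r a. U a x $$ (\<alpha>,\<beta>) * Tm d r U Ut W i (Suc a) \<beta>))"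
        using EX[OF i] by (simp add: distrib_left sum.distrib)
      also have "\<dots> = (\<Sum>\<delta><r a. M \<gamma> \<delta> * Qm d r Ut i a $$ (\<delta>,0))
          + (\<Sum>\<beta><r a. (\<Sum>x<n a. \<Sum>\<alpha><r (a-1). W a x $$ (\<alpha>,\<gamma>) * U a x $$ (\<alpha>,\<beta>)) * Tm d r U Ut W i (Suc a) \<beta>)"
        unfolding swap3 M_def ..
      also have "\<dots> = (\<Sum>\<delta><r a. M \<gamma> \<delta> * Qm d r Ut i a $$ (\<delta>,0))"
        using GC aset g by simp
      finally show ?thesis by simp
    qed
    have "M \<gamma> \<gamma> = 0"
      using ND[OF rd ro np cUt a, of "M \<gamma>" \<gamma>] Z g unfolding Qm_def by blast
    then show ?thesis using sum_sq_zero[of "\<lambda>x \<alpha>. W a x $$ (\<alpha>,\<gamma>)"] x al unfolding M_def by blast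
  qed
  have H1: "\<forall>i\<in>tt_index d n. \<forall>\<gamma><r (Suc a - 1). Tm d r U Ut W i (Suc a) \<gamma> = 0"
  proof (intro ballI allI impI)
    fix i \<gamma> assume i: "i \<in> tt_index d n" and g': "\<gamma> < r (Suc a - 1)"
    then have g: "\<gamma> < r a" by simp
    have "0 = (\<Sum>x<n a. \<Sum>\<alpha><r (a-1). U a x $$ (\<alpha>,\<gamma>) * Tm d r U Ut W (i(a := x)) a \<alpha>)"
      using H tt_upd[OF i aset(1)] by simp
    also have "\<dots> = (\<Sum>x<n a. \<Sum>\<alpha><r (a-1). U a x $$ (\<alpha>,\<gamma>) * (\<Sum>\<beta><r a. U a x $$ (\<alpha>,\<beta>) * Tm d r U Ut W i (Suc a) \<beta>))"
      using EX[OF i] WZ by simp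
    also have "\<dots> = (\<Sum>\<beta><r a. (if \<gamma> = \<beta> then 1 else 0) * Tm d r U Ut W i (Suc a) \<beta>)"
      unfolding swap3 using LO aset g by simp
    also have "\<dots> = Tm d r U Ut W i (Suc a) \<gamma>"
      using g by (simp add: if_distrib[of "\<lambda>x. x * _"] cong: if_cong)
    finally show "Tm d r U Ut W i (Suc a) \<gamma> = 0" by simp
  qed
  have IH: "\<forall>k\<in>{Suc a..d}. \<forall>x<n k. \<forall>\<alpha><r (k-1). \<forall>\<gamma><r k. W k x $$ (\<alpha>,\<gamma>) = 0"
    using Suc.hyps(1)[of "Suc a"] Suc.hyps(2) a H1 by simp
  show ?case
  proof (intro ballI allI impI)
    fix k x \<alpha> \<gamma> assume k: "k \<in> {a..d}" and x: "x < n k" and al: "\<alpha> < r (k-1)" and g: "\<gamma> < r k"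
    show "W k x $$ (\<alpha>,\<gamma>) = 0"
    proof (cases "k = a")
      case True then show ?thesis using WZ x al g by simp
    next
      case False then show ?thesis using IH k x al g by auto
    qed
  qed
qed

lemma leftU_mult:
  assumes rp: "0 < r (k-1)" and G': "\<forall>x<n k. G' k x = G k x * Sk"
    and G: "\<forall>x<n k. G k x \<in> carrier_mat (r (k-1)) (r k)" and Sk: "Sk \<in> carrier_mat (r k) (r k)"
  shows "leftU r n G' k = leftU r n G k * Sk"
proof (rule eq_matI)
  fix p \<beta> assume p: "p < dim_row (leftU r n G k * Sk)" and b: "\<beta> < dim_col (leftU r n G k * Sk)"
  then have p': "p < r (k-1) * n k" and b': "\<beta> < r k" using Sk by (auto simp: leftU_def)
  have x: "p div r (k-1) < n k" using p' by (simp add: less_mult_imp_div_less mult.commute)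
  have pm: "p mod r (k-1) < r (k-1)" using rp by simp
  have "leftU r n G' k $$ (p,\<beta>) = (G k (p div r (k-1)) * Sk) $$ (p mod r (k-1), \<beta>)"
    using p' b' G' x by (simp add: leftU_def)
  also have "\<dots> = (\<Sum>\<epsilon><r k. G k (p div r (k-1)) $$ (p mod r (k-1), \<epsilon>) * Sk $$ (\<epsilon>,\<beta>))"
    using G x Sk pm b' by (subst mult_entry) auto
  also have "\<dots> = (leftU r n G k * Sk) $$ (p,\<beta>)"
    using p' b' Sk by (subst mult_entry) (auto simp: leftU_def)
  finally show "leftU r n G' k $$ (p,\<beta>) = (leftU r n G k * Sk) $$ (p,\<beta>)" .
qed (use Sk in \<open>auto simp: leftU_def\<close>)

lemma Tterm:
  assumes cG: "core_dims d n r G" and cH: "core_dims d n r H" and cD: "core_dims d n r D"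
    and r0: "r 0 = 1" and rd: "r d = 1" and i: "i \<in> tt_index d n" and k: "k \<in> {1..d}"
  shows "mprod 1 (map (\<lambda>j. G j (i j)) [1..<k] @ [D k (i k)] @ map (\<lambda>j. H j (i j)) [k+1..<d+1])
     = Pm r G i 1 k * (D k (i k) * Qm d r H i k)"
proof -
  have Dk: "D k (i k) \<in> carrier_mat (r (k-1)) (r k)" using W_carrier[OF cD i] k by simp
  have Qk: "Qm d r H i k \<in> carrier_mat (r k) 1" using Qm_carrier[OF cH i rd] k by simp
  have E: "mprod (r (k-1)) (D k (i k) # map (\<lambda>j. H j (i j)) [Suc k..<Suc d]) = D k (i k) * Qm d r H i k"
    using Dk unfolding Qm_def by simp
  have R: "mprod (r (k-1)) (D k (i k) # map (\<lambda>j. H j (i j)) [Suc k..<Suc d]) \<in> carrier_mat (r (k-1)) 1"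
    unfolding E using Dk Qk by simp
  have idx: "\<forall>j. 1 \<le> j \<longrightarrow> j < k \<longrightarrow> i j < n j" using k i unfolding tt_index_def by auto
  have k1: "1 \<le> k" "k \<le> Suc d" using k by auto
  have M: "mprod (r (1-1)) (map (\<lambda>j. G j (i j)) [1..<k] @ (D k (i k) # map (\<lambda>j. H j (i j)) [Suc k..<Suc d]))
     = mprod (r (1-1)) (map (\<lambda>j. G j (i j)) [1..<k]) * mprod (r (k-1)) (D k (i k) # map (\<lambda>j. H j (i j)) [Suc k..<Suc d])"
    by (rule mprod_app[OF cG order.refl k1 idx R])
  have L: "map (\<lambda>j. G j (i j)) [1..<k] @ [D k (i k)] @ map (\<lambda>j. H j (i j)) [k+1..<d+1] = map (\<lambda>j. G j (i j)) [1..<k] @ (D k (i k) # map (\<lambda>j. H j (i j)) [Suc k..<Suc d])"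
    by simp
  have r1: "r (1-1) = 1" using r0 by simp
  show ?thesis unfolding L Pm_def using M unfolding E r1 .
qed

theorem lemma12:
  fixes d :: nat and n r :: "nat \<Rightarrow> nat"
    and X V :: "(nat \<Rightarrow> nat) \<Rightarrow> real"
    and U Ut dV dVt :: "nat \<Rightarrow> nat \<Rightarrow> real mat"
    and Rk :: "nat \<Rightarrow> real mat"
  assumes "d \<ge> 2"
    and "\<forall>j\<in>{1..d}. n j > 0"
    and "r 0 = 1" and "r d = 1" and "\<forall>k\<in>{1..d-1}. r k > 0"
    and "has_tt_rank d n r X"
    and "core_dims d n r U" and "tt_repr d n U X" and "left_orth d n r U"
    and "core_dims d n r Ut" and "tt_repr d n Ut X" and "right_orth d n r Ut"
    and "gauge_related d n r U Ut"
    and "\<forall>k\<in>{1..d-1}. Rk k \<in> carrier_mat (r k) (r k) \<and> invertible_mat (Rk k) \<and>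
            Xge d n r U (k+1) = Xge d n r Ut (k+1) * Rk k"
    and "core_dims d n r dV" and "tangent_repr d n U U dV V" and "gauge_cond d n r U dV"
    and "core_dims d n r dVt" and "tangent_repr d n U Ut dVt V" and "gauge_cond d n r U dVt"
  shows "(\<forall>k\<in>{1..d-1}. leftU r n dVt k = leftU r n dV k * transpose_mat (Rk k))
         \<and> leftU r n dVt d = leftU r n dV d"
proof -
  note d2 = assms(1) and np = assms(2) and r0 = assms(3) and rd = assms(4) and rp = assms(5)
  note cU = assms(7) and lo = assms(9) and cUt = assms(10) and ro = assms(12) and gre = assms(13)
  note RkH = assms(14) and cdV = assms(15) and tV = assms(16) and gV = assms(17)
  note cdVt = assms(18) and tVt = assms(19) and gVt = assms(20)
  obtain S where S0: "S 0 = 1\<^sub>m 1" and Sd: "S d = 1\<^sub>m 1"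
    and Sc': "\<forall>k\<in>{1..d-1}. S k \<in> carrier_mat (r k) (r k) \<and> invertible_mat (S k)"
    and gr: "\<forall>k\<in>{1..d}. \<forall>i<n k. U k i * S k = S (k-1) * Ut k i"
    using gre unfolding gauge_related_def by blast
  have Sc: "\<forall>k\<le>d. S k \<in> carrier_mat (r k) (r k)"
  proof (intro allI impI)
    fix k assume "k \<le> d"
    then consider "k = 0" | "k = d" | "k \<in> {1..d-1}" by force
    then show "S k \<in> carrier_mat (r k) (r k)" using S0 Sd Sc' r0 rd by cases auto
  qed
  have rpos: "\<And>k. k \<le> d \<Longrightarrow> 0 < r k"
  proof -
    fix k assume "k \<le> d"
    then consider "k = 0" | "k = d" | "k \<in> {1..d-1}" by force
    then show "0 < r k" using rp r0 rd by cases auto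
  qed
  define W where "W = (\<lambda>k x. dV k x * S k - dVt k x)"
  have cW: "core_dims d n r W"
    unfolding core_dims_def W_def
  proof (intro ballI allI impI)
    fix k x assume k: "k \<in> {1..d}" and x: "x < n k"
    have "dV k x \<in> carrier_mat (r (k-1)) (r k)" "dVt k x \<in> carrier_mat (r (k-1)) (r k)"
      using cdV cdVt k x unfolding core_dims_def by auto
    moreover have "S k \<in> carrier_mat (r k) (r k)" using Sc k by auto
    ultimately show "dV k x * S k - dVt k x \<in> carrier_mat (r (k-1)) (r k)" by auto
  qed
  have gE: "(\<Sum>x<n k. \<Sum>\<alpha><r (k-1). A k x $$ (\<alpha>,\<gamma>) * U k x $$ (\<alpha>,\<beta>)) = 0"
    if gc: "gauge_cond d n r U A" and k: "k \<in> {1..d-1}" and g: "\<gamma> < r k" and b: "\<beta> < r k" for A k \<gamma> \<beta>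
  proof -
    have "0 < r (k-1)" using k by (intro rpos) auto
    then show ?thesis using leftU_prod_entry[where r=r and k=k and n=n and A=A and B=U, OF _ g b] gc k g b
      unfolding gauge_cond_def by simp
  qed
  have LO: "\<forall>k\<in>{1..d-1}. \<forall>\<gamma><r k. \<forall>\<beta><r k. (\<Sum>x<n k. \<Sum>\<alpha><r (k-1). U k x $$ (\<alpha>,\<gamma>) * U k x $$ (\<alpha>,\<beta>)) = (if \<gamma> = \<beta> then 1 else 0)"
  proof (intro ballI allI impI)
    fix k \<gamma> \<beta> assume k: "k \<in> {1..d-1}" and g: "\<gamma> < r k" and b: "\<beta> < r k"
    have "0 < r (k-1)" using k by (intro rpos) auto
    then show "(\<Sum>x<n k. \<Sum>\<alpha><r (k-1). U k x $$ (\<alpha>,\<gamma>) * U k x $$ (\<alpha>,\<beta>)) = (if \<gamma> = \<beta> then 1 else 0)"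
      using leftU_prod_entry[where r=r and k=k and n=n and A=U and B=U, OF _ g b] lo k g b
      unfolding left_orth_def by simp
  qed
  have GC: "\<forall>k\<in>{1..d-1}. \<forall>\<gamma><r k. \<forall>\<beta><r k. (\<Sum>x<n k. \<Sum>\<alpha><r (k-1). W k x $$ (\<alpha>,\<gamma>) * U k x $$ (\<alpha>,\<beta>)) = 0"
  proof (intro ballI allI impI)
    fix k \<gamma> \<beta> assume k: "k \<in> {1..d-1}" and g: "\<gamma> < r k" and b: "\<beta> < r k"
    have Sk: "S k \<in> carrier_mat (r k) (r k)" using Sc k by auto
    have "(\<Sum>x<n k. \<Sum>\<alpha><r (k-1). W k x $$ (\<alpha>,\<gamma>) * U k x $$ (\<alpha>,\<beta>))
       = (\<Sum>x<n k. \<Sum>\<alpha><r (k-1). ((\<Sum>\<epsilon><r k. dV k x $$ (\<alpha>,\<epsilon>) * S k $$ (\<epsilon>,\<gamma>)) - dVt k x $$ (\<alpha>,\<gamma>)) * U k x $$ (\<alpha>,\<beta>))"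
    proof (intro sum.cong refl)
      fix x \<alpha> assume x: "x \<in> {..<n k}" and al: "\<alpha> \<in> {..<r (k-1)}"
      have "dV k x \<in> carrier_mat (r (k-1)) (r k)" "dVt k x \<in> carrier_mat (r (k-1)) (r k)"
        using cdV cdVt k x unfolding core_dims_def by auto
      then show "W k x $$ (\<alpha>,\<gamma>) * U k x $$ (\<alpha>,\<beta>) = ((\<Sum>\<epsilon><r k. dV k x $$ (\<alpha>,\<epsilon>) * S k $$ (\<epsilon>,\<gamma>)) - dVt k x $$ (\<alpha>,\<gamma>)) * U k x $$ (\<alpha>,\<beta>)"
        using Sk al g unfolding W_def by (simp add: scalar_prod_def lessThan_atLeast0)
    qed
    also have "\<dots> = (\<Sum>\<epsilon><r k. S k $$ (\<epsilon>,\<gamma>) * (\<Sum>x<n k. \<Sum>\<alpha><r (k-1). dV k x $$ (\<alpha>,\<epsilon>) * U k x $$ (\<alpha>,\<beta>)))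
        - (\<Sum>x<n k. \<Sum>\<alpha><r (k-1). dVt k x $$ (\<alpha>,\<gamma>) * U k x $$ (\<alpha>,\<beta>))"
    proof -
      have "(\<Sum>x<n k. \<Sum>\<alpha><r (k-1). (\<Sum>\<epsilon><r k. dV k x $$ (\<alpha>,\<epsilon>) * S k $$ (\<epsilon>,\<gamma>)) * U k x $$ (\<alpha>,\<beta>))
          = (\<Sum>x<n k. \<Sum>\<alpha><r (k-1). 1 * (\<Sum>\<epsilon><r k. dV k x $$ (\<alpha>,\<epsilon>) * U k x $$ (\<alpha>,\<beta>) * S k $$ (\<epsilon>,\<gamma>)))"
        by (simp add: sum_distrib_left sum_distrib_right mult_ac)
      also have "\<dots> = (\<Sum>\<epsilon><r k. (\<Sum>x<n k. \<Sum>\<alpha><r (k-1). 1 * (dV k x $$ (\<alpha>,\<epsilon>) * U k x $$ (\<alpha>,\<beta>))) * S k $$ (\<epsilon>,\<gamma>))"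
        by (rule swap3)
      also have "\<dots> = (\<Sum>\<epsilon><r k. S k $$ (\<epsilon>,\<gamma>) * (\<Sum>x<n k. \<Sum>\<alpha><r (k-1). dV k x $$ (\<alpha>,\<epsilon>) * U k x $$ (\<alpha>,\<beta>)))"
        by (simp add: mult_ac)
      finally have F: "(\<Sum>x<n k. \<Sum>\<alpha><r (k-1). (\<Sum>\<epsilon><r k. dV k x $$ (\<alpha>,\<epsilon>) * S k $$ (\<epsilon>,\<gamma>)) * U k x $$ (\<alpha>,\<beta>))
          = (\<Sum>\<epsilon><r k. S k $$ (\<epsilon>,\<gamma>) * (\<Sum>x<n k. \<Sum>\<alpha><r (k-1). dV k x $$ (\<alpha>,\<epsilon>) * U k x $$ (\<alpha>,\<beta>)))" .
      show ?thesis unfolding left_diff_distrib sum_subtractf F ..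
    qed
    also have "\<dots> = 0" using gE[OF gV k _ b] gE[OF gVt k g b] by simp
    finally show "(\<Sum>x<n k. \<Sum>\<alpha><r (k-1). W k x $$ (\<alpha>,\<gamma>) * U k x $$ (\<alpha>,\<beta>)) = 0" .
  qed
  have H1: "\<forall>i\<in>tt_index d n. \<forall>\<alpha><r (1-1). Tm d r U Ut W i 1 \<alpha> = 0"
  proof (intro ballI allI impI)
    fix i \<alpha> assume i: "i \<in> tt_index d n" and al: "\<alpha> < r (1-1)"
    then have a0: "\<alpha> = 0" using r0 by simp
    have TT: "(Pm r U i 1 k * (W k (i k) * Qm d r Ut i k)) $$ (0,0)
      = mprod 1 (map (\<lambda>j. U j (i j)) [1..<k] @ [dV k (i k)] @ map (\<lambda>j. U j (i j)) [k+1..<d+1]) $$ (0,0)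
      - mprod 1 (map (\<lambda>j. U j (i j)) [1..<k] @ [dVt k (i k)] @ map (\<lambda>j. Ut j (i j)) [k+1..<d+1]) $$ (0,0)"
      if k: "k \<in> {1..d}" for k
    proof -
      have k1: "1 \<le> k" "k \<le> d" using k by auto
      have r1: "r (1-1) = 1" using r0 by simp
      have P0: "Pm r U i 1 k \<in> carrier_mat (r (1-1)) (r (k-1))" by (rule Pm_carrier[OF cU i order.refl k1])
      have P: "Pm r U i 1 k \<in> carrier_mat 1 (r (k-1))" using P0 unfolding r1 .
      have D1: "dV k (i k) \<in> carrier_mat (r (k-1)) (r k)" by (rule W_carrier[OF cdV i k1])
      have D2: "dVt k (i k) \<in> carrier_mat (r (k-1)) (r k)" by (rule W_carrier[OF cdVt i k1])
      have Sk: "S k \<in> carrier_mat (r k) (r k)" using Sc k1(2) by blast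
      have Q1: "Qm d r U i k \<in> carrier_mat (r k) 1" by (rule Qm_carrier[OF cU i rd k1(2)])
      have Q2: "Qm d r Ut i k \<in> carrier_mat (r k) 1" by (rule Qm_carrier[OF cUt i rd k1(2)])
      have idx: "\<forall>j. k < j \<longrightarrow> j \<le> d \<longrightarrow> i j < n j" using i k1 unfolding tt_index_def by auto
      have SQk: "S k * Qm d r Ut i k = Qm d r U i k"
        unfolding Qm_def by (rule SQ[OF cU cUt Sd rd Sc gr k1(2) idx])
      have DS: "dV k (i k) * S k \<in> carrier_mat (r (k-1)) (r k)" by (rule mult_carrier_mat[OF D1 Sk])
      have "W k (i k) * Qm d r Ut i k = dV k (i k) * S k * Qm d r Ut i k - dVt k (i k) * Qm d r Ut i k"
        unfolding W_def by (rule minus_mult_distrib_mat[OF DS D2 Q2])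
      also have "dV k (i k) * S k * Qm d r Ut i k = dV k (i k) * (S k * Qm d r Ut i k)"
        by (rule assoc_mult_mat[OF D1 Sk Q2])
      also have "\<dots> = dV k (i k) * Qm d r U i k" unfolding SQk ..
      finally have WQ: "W k (i k) * Qm d r Ut i k = dV k (i k) * Qm d r U i k - dVt k (i k) * Qm d r Ut i k" .
      have A1: "dV k (i k) * Qm d r U i k \<in> carrier_mat (r (k-1)) 1" by (rule mult_carrier_mat[OF D1 Q1])
      have A2: "dVt k (i k) * Qm d r Ut i k \<in> carrier_mat (r (k-1)) 1" by (rule mult_carrier_mat[OF D2 Q2])
      have EQ1: "Pm r U i 1 k * (W k (i k) * Qm d r Ut i k) = Pm r U i 1 k * (dV k (i k) * Qm d r U i k) - Pm r U i 1 k * (dVt k (i k) * Qm d r Ut i k)"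
        unfolding WQ by (rule mult_minus_distrib_mat[OF P A1 A2])
      have cB: "Pm r U i 1 k * (dVt k (i k) * Qm d r Ut i k) \<in> carrier_mat 1 1" by (rule mult_carrier_mat[OF P A2])
      have cB1: "0 < dim_row (Pm r U i 1 k * (dVt k (i k) * Qm d r Ut i k))" "0 < dim_col (Pm r U i 1 k * (dVt k (i k) * Qm d r Ut i k))"
        using carrier_matD[OF cB] by auto
      have E00: "(Pm r U i 1 k * (W k (i k) * Qm d r Ut i k)) $$ (0,0) = (Pm r U i 1 k * (dV k (i k) * Qm d r U i k)) $$ (0,0) - (Pm r U i 1 k * (dVt k (i k) * Qm d r Ut i k)) $$ (0,0)"
        unfolding EQ1 by (rule index_minus_mat(1)[OF cB1])
      show ?thesis unfolding E00 Tterm[OF cU cU cdV r0 rd i k] Tterm[OF cU cUt cdVt r0 rd i k] ..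
    qed
    have "Tm d r U Ut W i 1 0 = (\<Sum>k\<in>{1..d}. mprod 1 (map (\<lambda>j. U j (i j)) [1..<k] @ [dV k (i k)] @ map (\<lambda>j. U j (i j)) [k+1..<d+1]) $$ (0,0))
      - (\<Sum>k\<in>{1..d}. mprod 1 (map (\<lambda>j. U j (i j)) [1..<k] @ [dVt k (i k)] @ map (\<lambda>j. Ut j (i j)) [k+1..<d+1]) $$ (0,0))"
      unfolding Tm_def sum_subtractf[symmetric] by (rule sum.cong[OF refl]) (rule TT)
    also have "\<dots> = V i - V i"
    proof -
      have A: "V i = (\<Sum>k=1..d. mprod 1 (map (\<lambda>j. U j (i j)) [1..<k] @ [dV k (i k)] @ map (\<lambda>j. U j (i j)) [k+1..<d+1]) $$ (0,0))"
        using bspec[OF tV[unfolded tangent_repr_def] i] .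
      have B: "V i = (\<Sum>k=1..d. mprod 1 (map (\<lambda>j. U j (i j)) [1..<k] @ [dVt k (i k)] @ map (\<lambda>j. Ut j (i j)) [k+1..<d+1]) $$ (0,0))"
        using bspec[OF tVt[unfolded tangent_repr_def] i] .
      show ?thesis unfolding A[symmetric] B[symmetric] ..
    qed
    finally show "Tm d r U Ut W i 1 \<alpha> = 0" using a0 by simp
  qed
  have WZ: "\<forall>k\<in>{1..d}. \<forall>x<n k. \<forall>\<alpha><r (k-1). \<forall>\<gamma><r k. W k x $$ (\<alpha>,\<gamma>) = 0"
    using peel[OF rd np cU cUt cW ro LO GC, of 1] H1 d2 by simp
  have EQ: "dVt k x = dV k x * S k" if k: "k \<in> {1..d}" and x: "x < n k" for k x
  proof -
    have D1: "dV k x \<in> carrier_mat (r (k-1)) (r k)" using cdV k x unfolding core_dims_def by simp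
    have D2: "dVt k x \<in> carrier_mat (r (k-1)) (r k)" using cdVt k x unfolding core_dims_def by simp
    have Sk: "S k \<in> carrier_mat (r k) (r k)" using Sc k by force
    show ?thesis
    proof (rule eq_matI)
      fix \<alpha> \<gamma> assume "\<alpha> < dim_row (dV k x * S k)" "\<gamma> < dim_col (dV k x * S k)"
      then have al: "\<alpha> < r (k-1)" and g: "\<gamma> < r k" using D1 Sk by auto
      have "W k x $$ (\<alpha>,\<gamma>) = 0" using WZ k x al g by blast
      then show "dVt k x $$ (\<alpha>,\<gamma>) = (dV k x * S k) $$ (\<alpha>,\<gamma>)"
        unfolding W_def using al g D1 D2 Sk by simp
    qed (use D1 D2 Sk in auto)
  qed
  have SR: "S k = transpose_mat (Rk k)" if k: "k \<in> {1..d-1}" for k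
  proof -
    define m where "m = d - k"
    have m: "m < d" "d - m = k" "d + 1 - (k + 1) = m" using k m_def by auto
    define X where "X = XgeT d n r U m"
    define Xt where "Xt = XgeT d n r Ut m"
    have cX: "X \<in> carrier_mat (r k) (ncols d n m)"
      using XgeT_dims[where r=r and d=d and n=n and G=U and m=m, OF rd] m unfolding X_def by auto
    have cXt: "Xt \<in> carrier_mat (r k) (ncols d n m)"
      using XgeT_dims[where r=r and d=d and n=n and G=Ut and m=m, OF rd] m unfolding Xt_def by auto
    have Sk: "S k \<in> carrier_mat (r k) (r k)" using Sc k by force
    have Rc: "Rk k \<in> carrier_mat (r k) (r k)" using RkH k by simp
    have XS: "X = S k * Xt"
    proof (rule eq_matI)
      fix \<alpha> q assume "\<alpha> < dim_row (S k * Xt)" "q < dim_col (S k * Xt)"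
      then have al: "\<alpha> < r k" and q: "q < ncols d n m" using Sk cXt by auto
      define c where "c = colex_decode n (Suc k) q"
      have ci: "\<forall>j. k < j \<longrightarrow> j \<le> d \<longrightarrow> c j < n j" using np unfolding c_def colex_decode_def by auto
      have Q1: "mprod (r k) (map (\<lambda>j. U j (c j)) [Suc k..<Suc d]) \<in> carrier_mat (r (Suc k - 1)) (r (Suc d - 1))"
        using mprod_carrier[OF cU, of "Suc k" "Suc d" c] ci k by auto
      have Q2: "mprod (r k) (map (\<lambda>j. Ut j (c j)) [Suc k..<Suc d]) \<in> carrier_mat (r (Suc k - 1)) (r (Suc d - 1))"
        using mprod_carrier[OF cUt, of "Suc k" "Suc d" c] ci k by auto
      have "X $$ (\<alpha>,q) = mprod (r k) (map (\<lambda>j. U j (c j)) [Suc k..<Suc d]) $$ (\<alpha>,0)"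
        using XgeT_char[OF rd cU np m(1), of \<alpha> q] al q m unfolding X_def c_def by simp
      also have "\<dots> = (S k * mprod (r k) (map (\<lambda>j. Ut j (c j)) [Suc k..<Suc d])) $$ (\<alpha>,0)"
      proof -
        have kd: "k \<le> d" using k by auto
        have SQc: "S k * mprod (r k) (map (\<lambda>j. Ut j (c j)) [Suc k..<Suc d]) = mprod (r k) (map (\<lambda>j. U j (c j)) [Suc k..<Suc d])"
          by (rule SQ[OF cU cUt Sd rd Sc gr kd ci])
        show ?thesis unfolding SQc ..
      qed
      also have "\<dots> = (\<Sum>\<beta><r k. S k $$ (\<alpha>,\<beta>) * mprod (r k) (map (\<lambda>j. Ut j (c j)) [Suc k..<Suc d]) $$ (\<beta>,0))"
        using Sk Q2 al rd by (simp add: scalar_prod_def lessThan_atLeast0)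
      also have "\<dots> = (\<Sum>\<beta><r k. S k $$ (\<alpha>,\<beta>) * Xt $$ (\<beta>,q))"
        using XgeT_char[OF rd cUt np m(1), of _ q] q m unfolding Xt_def c_def by simp
      also have "\<dots> = (S k * Xt) $$ (\<alpha>,q)"
        using Sk cXt al q by (simp add: scalar_prod_def lessThan_atLeast0)
      finally show "X $$ (\<alpha>,q) = (S k * Xt) $$ (\<alpha>,q)" .
    qed (use Sk cX cXt in auto)
    have hyp: "transpose_mat X = transpose_mat Xt * Rk k"
    proof -
      have "Xge d n r U (k+1) = Xge d n r Ut (k+1) * Rk k" using RkH k by blast
      then show ?thesis unfolding Xge_def m(3) X_def Xt_def .
    qed
    have orth: "Xt * transpose_mat Xt = 1\<^sub>m (r k)"
      using XgeT_orth[OF rd ro np m(1)] m unfolding Xt_def by simp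
    have "Rk k = (Xt * transpose_mat Xt) * Rk k" using orth Rc by simp
    also have "\<dots> = Xt * (transpose_mat Xt * Rk k)" using cXt Rc by (simp add: assoc_mult_mat[of _ "r k" "ncols d n m"])
    also have "\<dots> = Xt * transpose_mat X" using hyp by simp
    also have "\<dots> = Xt * (transpose_mat Xt * transpose_mat (S k))" unfolding XS using transpose_mult[OF Sk cXt] by simp
    also have "\<dots> = (Xt * transpose_mat Xt) * transpose_mat (S k)" using cXt Sk by (simp add: assoc_mult_mat[of _ "r k" "ncols d n m"])
    also have "\<dots> = transpose_mat (S k)" using orth Sk by simp
    finally show ?thesis by simp
  qed
  have F1: "leftU r n dVt k = leftU r n dV k * S k" if k: "k \<in> {1..d}" for k
  proof (rule leftU_mult)
    show "0 < r (k-1)" using k by (intro rpos) auto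
    show "\<forall>x<n k. dVt k x = dV k x * S k" using EQ k by blast
    show "\<forall>x<n k. dV k x \<in> carrier_mat (r (k-1)) (r k)" using cdV k unfolding core_dims_def by blast
    show "S k \<in> carrier_mat (r k) (r k)" using Sc k by force
  qed
  show ?thesis
  proof
    show "\<forall>k\<in>{1..d-1}. leftU r n dVt k = leftU r n dV k * transpose_mat (Rk k)"
      using F1 SR by auto
    have "leftU r n dVt d = leftU r n dV d * 1\<^sub>m 1" using F1[of d] Sd d2 by simp
    also have "\<dots> = leftU r n dV d" using rd by (simp add: leftU_def)
    finally show "leftU r n dVt d = leftU r n dV d" .
  qed
qed

end
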